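(* For a $K\times N$ multicast switch with a given traffic pattern, if a rate vector $\mathbf r$ is admissible, then its enhanced rate vector $\mathbf e(\mathbf r)$ lies in $QSTAB(G)$, where $G$ is the enhanced conflict graph; i.e. $\mathbf e(\mathbf r)$ is nonnegative and satisfies all clique inequalities of $G$.
   Context: A flow is a pair $(i,J)$ with input $i\in[K]$ and nonempty fanout $J\subseteq[N]$; a traffic pattern is a finite set of flows; a rate vector assigns $r_{iJ}\ge0$ to each flow. Subflows: $(i,J,j)$ with $j\in J$. $\mathbf r$ is admissible if $\mathbf r\ge0$, for each input $i$ the sum of $r_{iJ}$ over flows from $i$ is at most 1, and for each output $j$ the sum of $r_{iJ}$ over flows with $j\in J$ is at most 1. Enhanced rate vector: $\mathbf e(\mathbf r)_{iJj}=r_{iJ}$. Enhanced conflict graph $G$: one vertex per subflow; distinct $(i,J,j),(i',J',j')$ adjacent iff $j=j'$, or $i=i'$ and $J\ne J'$. $QSTAB(G)=\{x\ge0:\sum_{v\in Q}x_v\le1 \text{ for every clique } Q\}$. *)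

theory Defs
  imports Complex_Main
begin

text \<open>Inputs are [K] = {1..K}, outputs are [N] = {1..N}.
  A flow is a pair (i, J); a subflow is a triple (i, J, j).\<close>

type_synonym flow = "nat \<times> nat set"
type_synonym subflow = "nat \<times> nat set \<times> nat"

definition flows :: "nat \<Rightarrow> nat \<Rightarrow> flow set" where
  "flows K N = {(i, J). i \<in> {1..K} \<and> J \<subseteq> {1..N} \<and> J \<noteq> {}}"

definition traffic_pattern :: "nat \<Rightarrow> nat \<Rightarrow> flow set \<Rightarrow> bool" where
  "traffic_pattern K N F \<longleftrightarrow> finite F \<and> F \<subseteq> flows K N"

definition admissible :: "nat \<Rightarrow> nat \<Rightarrow> flow set \<Rightarrow> (flow \<Rightarrow> real) \<Rightarrow> bool" where
  "admissible K N F r \<longleftrightarrow>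
     (\<forall>f\<in>F. 0 \<le> r f) \<and>
     (\<forall>i\<in>{1..K}. (\<Sum>f\<in>{(i', J). (i', J) \<in> F \<and> i' = i}. r f) \<le> 1) \<and>
     (\<forall>j\<in>{1..N}. (\<Sum>f\<in>{(i, J). (i, J) \<in> F \<and> j \<in> J}. r f) \<le> 1)"

definition subflows :: "flow set \<Rightarrow> subflow set" where
  "subflows F = {(i, J, j). (i, J) \<in> F \<and> j \<in> J}"

definition enhanced_rate :: "(flow \<Rightarrow> real) \<Rightarrow> subflow \<Rightarrow> real" where
  "enhanced_rate r = (\<lambda>(i, J, j). r (i, J))"

definition ecg_adj :: "subflow \<Rightarrow> subflow \<Rightarrow> bool" where
  "ecg_adj u v \<longleftrightarrow> u \<noteq> v \<and>
     (case u of (i, J, j) \<Rightarrow> case v of (i', J', j') \<Rightarrow>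
        j = j' \<or> (i = i' \<and> J \<noteq> J'))"

definition is_clique :: "'v set \<Rightarrow> ('v \<Rightarrow> 'v \<Rightarrow> bool) \<Rightarrow> 'v set \<Rightarrow> bool" where
  "is_clique V adj Q \<longleftrightarrow> Q \<subseteq> V \<and> (\<forall>u\<in>Q. \<forall>v\<in>Q. u \<noteq> v \<longrightarrow> adj u v)"

text \<open>Clique-constrained stable set polytope of the graph (V, adj); vectors are
  functions, only their values on V matter.\<close>
definition QSTAB :: "'v set \<Rightarrow> ('v \<Rightarrow> 'v \<Rightarrow> bool) \<Rightarrow> ('v \<Rightarrow> real) set" where
  "QSTAB V adj = {x. (\<forall>v\<in>V. 0 \<le> x v) \<and>
                     (\<forall>Q. is_clique V adj Q \<longrightarrow> (\<Sum>v\<in>Q. x v) \<le> 1)}"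

end

theory Submission
  imports Defs
begin

lemma clique_shape:
  assumes "is_clique V ecg_adj Q"
  shows "(\<exists>j. \<forall>v\<in>Q. snd (snd v) = j) \<or> (\<exists>i. \<forall>v\<in>Q. fst v = i)"
proof (cases "Q = {}")
  case True then show ?thesis by auto
next
  case False
  then obtain v0 where v0: "v0 \<in> Q" by auto
  show ?thesis
  proof (cases "\<forall>v\<in>Q. snd (snd v) = snd (snd v0)")
    case True then show ?thesis by blast
  next
    case False
    then obtain w where w: "w \<in> Q" "snd (snd w) \<noteq> snd (snd v0)" by auto
    have adj: "\<And>u v. u \<in> Q \<Longrightarrow> v \<in> Q \<Longrightarrow> u \<noteq> v \<Longrightarrow>
        snd (snd u) = snd (snd v) \<or> fst u = fst v"
      using assms unfolding is_clique_def ecg_adj_def by (fastforce split: prod.splits)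
    have "\<forall>u\<in>Q. fst u = fst v0"
    proof
      fix u assume u: "u \<in> Q"
      show "fst u = fst v0"
      proof (rule ccontr)
        assume ne: "fst u \<noteq> fst v0"
        have wv: "fst w = fst v0" using adj[OF w(1) v0] w(2) by auto
        have "snd (snd u) = snd (snd v0)" using adj[OF u v0] ne by auto
        moreover have "snd (snd u) = snd (snd w)" using adj[OF u w(1)] ne wv by auto
        ultimately show False using w(2) by simp
      qed
    qed
    then show ?thesis by blast
  qed
qed

theorem theorem5:
  fixes K N :: nat and F :: "flow set" and r :: "flow \<Rightarrow> real"
  assumes "traffic_pattern K N F"
    and "admissible K N F r"
  shows "enhanced_rate r \<in> QSTAB (subflows F) ecg_adj"
proof -
  have finF: "finite F" and FK: "F \<subseteq> flows K N" using assms(1) unfolding traffic_pattern_def by auto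
  have nn: "\<And>f. f \<in> F \<Longrightarrow> 0 \<le> r f" using assms(2) unfolding admissible_def by auto
  have inp: "\<And>i. i \<in> {1..K} \<Longrightarrow> (\<Sum>f\<in>{(i', J). (i', J) \<in> F \<and> i' = i}. r f) \<le> 1"
    using assms(2) unfolding admissible_def by auto
  have outp: "\<And>j. j \<in> {1..N} \<Longrightarrow> (\<Sum>f\<in>{(i, J). (i, J) \<in> F \<and> j \<in> J}. r f) \<le> 1"
    using assms(2) unfolding admissible_def by auto
  let ?p = "\<lambda>v::subflow. (fst v, fst (snd v))"
  have er: "\<And>v. enhanced_rate r v = r (?p v)" unfolding enhanced_rate_def by (auto split: prod.splits)
  have bound: "(\<Sum>v\<in>Q. enhanced_rate r v) \<le> 1" if cl: "is_clique (subflows F) ecg_adj Q" for Q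
  proof -
    have QS: "Q \<subseteq> subflows F" using cl unfolding is_clique_def by auto
    have pF: "?p ` Q \<subseteq> F" using QS unfolding subflows_def by auto
    have sumeq: "inj_on ?p Q \<Longrightarrow> (\<Sum>v\<in>Q. enhanced_rate r v) = (\<Sum>f\<in>?p ` Q. r f)"
      by (simp add: sum.reindex er)
    have le: "\<And>S. ?p ` Q \<subseteq> S \<Longrightarrow> S \<subseteq> F \<Longrightarrow> (\<Sum>f\<in>?p ` Q. r f) \<le> (\<Sum>f\<in>S. r f)"
      by (rule sum_mono2) (use finF nn finite_subset in auto)
    from clique_shape[OF cl] show ?thesis
    proof
      assume "\<exists>j. \<forall>v\<in>Q. snd (snd v) = j"
      then obtain j where j: "\<forall>v\<in>Q. snd (snd v) = j" by blast
      have inj: "inj_on ?p Q" using j by (auto simp: inj_on_def prod_eq_iff)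
      show ?thesis
      proof (cases "Q = {}")
        case True then show ?thesis by simp
      next
        case False
        then obtain v where v: "v \<in> Q" by auto
        then have "j \<in> fst (snd v)" using QS j unfolding subflows_def
          by (cases v) fastforce
        moreover have "?p v \<in> F" using pF v by auto
        ultimately have jN: "j \<in> {1..N}" using FK unfolding flows_def by blast
        have sub: "?p ` Q \<subseteq> {(i, J). (i, J) \<in> F \<and> j \<in> J}"
          using QS j unfolding subflows_def by fastforce
        have "(\<Sum>v\<in>Q. enhanced_rate r v) = (\<Sum>f\<in>?p ` Q. r f)" by (rule sumeq[OF inj])
        also have "\<dots> \<le> (\<Sum>f\<in>{(i, J). (i, J) \<in> F \<and> j \<in> J}. r f)" by (rule le[OF sub]) auto
        also have "\<dots> \<le> 1" by (rule outp[OF jN])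
        finally show ?thesis .
      qed
    next
      assume "\<exists>i. \<forall>v\<in>Q. fst v = i"
      then obtain i where i: "\<forall>v\<in>Q. fst v = i" by blast
      have inj: "inj_on ?p Q"
      proof (rule inj_onI)
        fix u v assume u: "u \<in> Q" and v: "v \<in> Q" and e: "?p u = ?p v"
        show "u = v"
        proof (rule ccontr)
          assume "u \<noteq> v"
          then have "ecg_adj u v" using cl u v unfolding is_clique_def by auto
          then show False using e `u \<noteq> v` unfolding ecg_adj_def by (auto simp: prod_eq_iff split: prod.splits)
        qed
      qed
      show ?thesis
      proof (cases "Q = {}")
        case True then show ?thesis by simp
      next
        case False
        then obtain v where v: "v \<in> Q" by auto
        have "?p v \<in> F" using pF v by auto
        then have iK: "i \<in> {1..K}" using FK i v unfolding flows_def by fastforce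
        have sub: "?p ` Q \<subseteq> {(i', J). (i', J) \<in> F \<and> i' = i}"
          using pF i by auto
        have "(\<Sum>v\<in>Q. enhanced_rate r v) = (\<Sum>f\<in>?p ` Q. r f)" by (rule sumeq[OF inj])
        also have "\<dots> \<le> (\<Sum>f\<in>{(i', J). (i', J) \<in> F \<and> i' = i}. r f)" by (rule le[OF sub]) auto
        also have "\<dots> \<le> 1" by (rule inp[OF iK])
        finally show ?thesis .
      qed
    qed
  qed
  have "\<forall>v\<in>subflows F. 0 \<le> enhanced_rate r v"
    using nn unfolding subflows_def enhanced_rate_def by auto
  then show ?thesis unfolding QSTAB_def using bound by auto
qed

end
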